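(* Let $\sigma_0\ge\sigma_1\ge\dots\ge\sigma_{r-1}>0$ with $\sum_{i=0}^{r-1}\sigma_i^2=1$ and $r\le\min(N_1,N_2)$ (with $\sigma_1:=0$ if $r=1$), let $|\sigma\rangle=\sum_{i=0}^{r-1}\sigma_i|ii\rangle\in\mathbb{C}^{N_1}\otimes\mathbb{C}^{N_2}$, let $\lambda\in[0,1]$ and $Q=(1-\lambda)\frac{\mathbb{I}_{N_1N_2}}{N_1N_2}+\lambda|\sigma\rangle\langle\sigma|$. Then $Q^{T_1}\ge0$ if and only if $\lambda\le\frac{1}{1+N_1N_2\sigma_0\sigma_1}$.
   Context: $Q^{T_1}$ denotes the partial transpose of $Q$ with respect to the first tensor factor in the computational basis: $(|a\rangle\langle b|\otimes|c\rangle\langle d|)^{T_1}=|b\rangle\langle a|\otimes|c\rangle\langle d|$, extended linearly. *)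

theory Defs
  imports "HOL-Analysis.Analysis" "HOL-Library.Complex_Order"
begin

text \<open>Operators on C^N1 (x) C^N2 are represented as functions on pairs of basis
  indices: the basis vector |a c> (a < N1, c < N2) is the pair (a, c), and
  M (a,c) (b,d) is the matrix entry <a c| M |b d>.\<close>

type_synonym bop = "nat \<times> nat \<Rightarrow> nat \<times> nat \<Rightarrow> complex"

definition basis_idx :: "nat \<Rightarrow> nat \<Rightarrow> (nat \<times> nat) set" where
  "basis_idx N1 N2 = {..<N1} \<times> {..<N2}"

definition psd :: "nat \<Rightarrow> nat \<Rightarrow> bop \<Rightarrow> bool" where
  "psd N1 N2 M \<longleftrightarrow>
     (\<forall>v :: nat \<times> nat \<Rightarrow> complex.
        0 \<le> (\<Sum>x\<in>basis_idx N1 N2. \<Sum>y\<in>basis_idx N1 N2. cnj (v x) * M x y * v y))"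

definition ptrans1 :: "bop \<Rightarrow> bop" where
  "ptrans1 M = (\<lambda>(a, c) (b, d). M (b, c) (a, d))"

definition sigma_ket :: "nat \<Rightarrow> (nat \<Rightarrow> real) \<Rightarrow> nat \<times> nat \<Rightarrow> complex" where
  "sigma_ket r \<sigma> = (\<lambda>(a, c). if a = c \<and> a < r then complex_of_real (\<sigma> a) else 0)"

definition Qop :: "nat \<Rightarrow> nat \<Rightarrow> nat \<Rightarrow> (nat \<Rightarrow> real) \<Rightarrow> real \<Rightarrow> bop" where
  "Qop N1 N2 r \<sigma> lam = (\<lambda>x y.
     complex_of_real ((1 - lam) / real (N1 * N2)) * (if x = y then 1 else 0)
     + complex_of_real lam * sigma_ket r \<sigma> x * cnj (sigma_ket r \<sigma> y))"

end

theory Submission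
  imports Defs
begin



lemma sum_prod: "(\<Sum>x\<in>A\<times>B. f x) = (\<Sum>a\<in>A. \<Sum>c\<in>B. f (a,c))"
  by (simp add: sum.cartesian_product)

lemma qf_part2:
  assumes "r \<le> min N1 N2"
  shows "(\<Sum>x\<in>basis_idx N1 N2. \<Sum>y\<in>basis_idx N1 N2. cnj (v x) * ((\<lambda>(a,c) (b,d). complex_of_real lam * sigma_ket r \<sigma> (b,c) * cnj (sigma_ket r \<sigma> (a,d))) x y) * v y)
   = (\<Sum>a<r. \<Sum>c<r. complex_of_real lam * complex_of_real (\<sigma> a * \<sigma> c) * cnj (v(a,c)) * v(c,a))"
proof -
  have "(\<Sum>x\<in>basis_idx N1 N2. \<Sum>y\<in>basis_idx N1 N2. cnj (v x) * ((\<lambda>(a,c) (b,d). complex_of_real lam * sigma_ket r \<sigma> (b,c) * cnj (sigma_ket r \<sigma> (a,d))) x y) * v y)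
    = (\<Sum>a<N1. \<Sum>c<N2. \<Sum>b<N1. \<Sum>d<N2. (if d = a then (if c = b \<and> a < r \<and> b < r then complex_of_real lam * complex_of_real (\<sigma> a * \<sigma> b) * cnj (v(a,c)) * v(b,d) else 0) else 0))"
    unfolding basis_idx_def sum_prod
    by (intro sum.cong refl) (auto simp: sigma_ket_def)
  also have "\<dots> = (\<Sum>a<N1. \<Sum>c<N2. \<Sum>b<N1. (if c = b \<and> a < r \<and> b < r then complex_of_real lam * complex_of_real (\<sigma> a * \<sigma> b) * cnj (v(a,c)) * v(b,a) else 0))"
    using assms by (intro sum.cong refl) (auto simp: sum.delta')
  also have "\<dots> = (\<Sum>a<N1. \<Sum>c<N2. (if a < r \<and> c < r then complex_of_real lam * complex_of_real (\<sigma> a * \<sigma> c) * cnj (v(a,c)) * v(c,a) else 0))"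
  proof (intro sum.cong refl)
    fix a c assume "c \<in> {..<N2}"
    show "(\<Sum>b<N1. (if c = b \<and> a < r \<and> b < r then complex_of_real lam * complex_of_real (\<sigma> a * \<sigma> b) * cnj (v(a,c)) * v(b,a) else 0))
       = (if a < r \<and> c < r then complex_of_real lam * complex_of_real (\<sigma> a * \<sigma> c) * cnj (v(a,c)) * v(c,a) else 0)"
    proof -
      have "(\<Sum>b<N1. (if c = b \<and> a < r \<and> b < r then complex_of_real lam * complex_of_real (\<sigma> a * \<sigma> b) * cnj (v(a,c)) * v(b,a) else 0))
        = (\<Sum>b<N1. if b = c then (if a < r \<and> c < r then complex_of_real lam * complex_of_real (\<sigma> a * \<sigma> c) * cnj (v(a,c)) * v(c,a) else 0) else 0)"
        by (intro sum.cong) auto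
      also have "\<dots> = (if a < r \<and> c < r then complex_of_real lam * complex_of_real (\<sigma> a * \<sigma> c) * cnj (v(a,c)) * v(c,a) else 0)"
        using assms by (subst sum.delta) auto
      finally show ?thesis .
    qed
  qed
  also have "\<dots> = (\<Sum>a<N1. if a < r then (\<Sum>c<r. complex_of_real lam * complex_of_real (\<sigma> a * \<sigma> c) * cnj (v(a,c)) * v(c,a)) else 0)"
  proof (intro sum.cong refl)
    fix a
    have e: "{..<N2} \<inter> {c. c < r} = {..<r}" using assms by auto
    show "(\<Sum>c<N2. (if a < r \<and> c < r then complex_of_real lam * complex_of_real (\<sigma> a * \<sigma> c) * cnj (v(a,c)) * v(c,a) else 0))
      = (if a < r then (\<Sum>c<r. complex_of_real lam * complex_of_real (\<sigma> a * \<sigma> c) * cnj (v(a,c)) * v(c,a)) else 0)"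
      by (auto simp: sum.If_cases e)
  qed
  also have "\<dots> = (\<Sum>a<r. \<Sum>c<r. complex_of_real lam * complex_of_real (\<sigma> a * \<sigma> c) * cnj (v(a,c)) * v(c,a))"
  proof -
    have e: "{..<N1} \<inter> {c. c < r} = {..<r}" using assms by auto
    show ?thesis by (simp add: sum.If_cases e)
  qed
  finally show ?thesis .
qed



lemma ptrans_Q:
  "ptrans1 (Qop N1 N2 r \<sigma> lam) = (\<lambda>x y. complex_of_real ((1 - lam) / real (N1 * N2)) * (if x = y then 1 else 0)
     + (\<lambda>(a,c) (b,d). complex_of_real lam * sigma_ket r \<sigma> (b,c) * cnj (sigma_ket r \<sigma> (a,d))) x y)"
  unfolding ptrans1_def Qop_def by (auto simp: fun_eq_iff)

lemma qf:
  assumes "r \<le> min N1 N2"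
  shows "(\<Sum>x\<in>basis_idx N1 N2. \<Sum>y\<in>basis_idx N1 N2. cnj (v x) * ptrans1 (Qop N1 N2 r \<sigma> lam) x y * v y)
    = complex_of_real ((1 - lam) / real (N1 * N2)) * (\<Sum>x\<in>basis_idx N1 N2. cnj (v x) * v x)
      + (\<Sum>a<r. \<Sum>c<r. complex_of_real lam * complex_of_real (\<sigma> a * \<sigma> c) * cnj (v(a,c)) * v(c,a))"
proof -
  define p where "p = complex_of_real ((1 - lam) / real (N1 * N2))"
  define T where "T = (\<lambda>(a,c) (b,d). complex_of_real lam * sigma_ket r \<sigma> (b,c) * cnj (sigma_ket r \<sigma> (a,d)))"
  have "(\<Sum>x\<in>basis_idx N1 N2. \<Sum>y\<in>basis_idx N1 N2. cnj (v x) * ptrans1 (Qop N1 N2 r \<sigma> lam) x y * v y)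
     = (\<Sum>x\<in>basis_idx N1 N2. (\<Sum>y\<in>basis_idx N1 N2. cnj (v x) * (p * (if x = y then 1 else 0)) * v y)
          + (\<Sum>y\<in>basis_idx N1 N2. cnj (v x) * T x y * v y))"
    unfolding ptrans_Q p_def[symmetric] T_def[symmetric] sum.distrib[symmetric]
    by (intro sum.cong refl) (simp add: distrib_left distrib_right)
  also have "\<dots> = (\<Sum>x\<in>basis_idx N1 N2. p * (cnj (v x) * v x))
          + (\<Sum>x\<in>basis_idx N1 N2. \<Sum>y\<in>basis_idx N1 N2. cnj (v x) * T x y * v y)"
  proof -
    have "\<And>x. x \<in> basis_idx N1 N2 \<Longrightarrow> (\<Sum>y\<in>basis_idx N1 N2. cnj (v x) * (p * (if x = y then 1 else 0)) * v y) = p * (cnj (v x) * v x)"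
    proof -
      fix x assume x: "x \<in> basis_idx N1 N2"
      have "(\<Sum>y\<in>basis_idx N1 N2. cnj (v x) * (p * (if x = y then 1 else 0)) * v y)
        = (\<Sum>y\<in>basis_idx N1 N2. if y = x then p * (cnj (v x) * v x) else 0)"
        by (intro sum.cong) auto
      also have "\<dots> = p * (cnj (v x) * v x)" using x by (simp add: basis_idx_def)
      finally show "(\<Sum>y\<in>basis_idx N1 N2. cnj (v x) * (p * (if x = y then 1 else 0)) * v y) = p * (cnj (v x) * v x)" .
    qed
    then show ?thesis by (simp add: sum.distrib)
  qed
  also have "\<dots> = p * (\<Sum>x\<in>basis_idx N1 N2. cnj (v x) * v x)
      + (\<Sum>a<r. \<Sum>c<r. complex_of_real lam * complex_of_real (\<sigma> a * \<sigma> c) * cnj (v(a,c)) * v(c,a))"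
    using qf_part2[OF assms, of v lam \<sigma>] unfolding T_def by (simp add: sum_distrib_left)
  finally show ?thesis unfolding p_def .
qed

lemma ReM: "Re (complex_of_real x * z) = x * Re z" by simp
lemma ImM: "Im (complex_of_real x * z) = x * Im z" by simp

lemma S_real:
  "(\<Sum>a<r. \<Sum>c<r. complex_of_real lam * complex_of_real (\<sigma> a * \<sigma> c) * cnj (v(a,c)) * v(c,a))
   = complex_of_real (\<Sum>a<r. \<Sum>c<r. lam * (\<sigma> a * \<sigma> c) * Re (cnj (v(a,c)) * v(c,a)))"
  (is "?S = _")
proof -
  have eqS: "?S = (\<Sum>a<r. \<Sum>c<r. complex_of_real (lam * (\<sigma> a * \<sigma> c)) * (cnj (v(a,c)) * v(c,a)))"
    by (intro sum.cong refl) (simp add: mult.assoc)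
  define f where "f a c = lam * (\<sigma> a * \<sigma> c) * Im (cnj (v(a,c)) * v(c,a))" for a c
  have fs: "f c a = - f a c" for a c unfolding f_def by (simp add: algebra_simps)
  have "(\<Sum>a<r. \<Sum>c<r. f a c) = (\<Sum>c<r. \<Sum>a<r. f a c)" by (rule sum.swap)
  also have "\<dots> = (\<Sum>c<r. \<Sum>a<r. - f c a)" by (intro sum.cong refl) (rule fs)
  also have "\<dots> = - (\<Sum>c<r. \<Sum>a<r. f c a)" by (simp add: sum_negf)
  finally have f0: "(\<Sum>a<r. \<Sum>c<r. f a c) = 0" by simp
  have "Im ?S = (\<Sum>a<r. \<Sum>c<r. f a c)" unfolding eqS Im_sum ImM f_def ..
  then have "Im ?S = 0" using f0 by simp
  moreover have "Re ?S = (\<Sum>a<r. \<Sum>c<r. lam * (\<sigma> a * \<sigma> c) * Re (cnj (v(a,c)) * v(c,a)))"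
    unfolding eqS Re_sum ReM ..
  ultimately show ?thesis by (simp only: complex_eq_iff Re_complex_of_real Im_complex_of_real)
qed

lemma norm_sq: "cnj z * z = complex_of_real ((cmod z)^2)"
proof -
  have "cnj z * z = z * cnj z" by (rule mult.commute)
  also have "\<dots> = complex_of_real ((cmod z)^2)" by (rule complex_norm_square[symmetric])
  finally show ?thesis .
qed

lemma psd_iff:
  assumes "r \<le> min N1 N2"
  shows "psd N1 N2 (ptrans1 (Qop N1 N2 r \<sigma> lam)) \<longleftrightarrow>
    (\<forall>v. 0 \<le> (1 - lam) / real (N1 * N2) * (\<Sum>x\<in>basis_idx N1 N2. (cmod (v x))^2)
      + (\<Sum>a<r. \<Sum>c<r. lam * (\<sigma> a * \<sigma> c) * Re (cnj (v(a,c)) * v(c,a))))"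
proof -
  have "\<And>v. (\<Sum>x\<in>basis_idx N1 N2. \<Sum>y\<in>basis_idx N1 N2. cnj (v x) * ptrans1 (Qop N1 N2 r \<sigma> lam) x y * v y)
    = complex_of_real ((1 - lam) / real (N1 * N2) * (\<Sum>x\<in>basis_idx N1 N2. (cmod (v x))^2)
      + (\<Sum>a<r. \<Sum>c<r. lam * (\<sigma> a * \<sigma> c) * Re (cnj (v(a,c)) * v(c,a))))"
    unfolding qf[OF assms] S_real norm_sq by simp
  then show ?thesis unfolding psd_def by (simp add: less_eq_complex_def)
qed

lemma re_bound: "Re (cnj x * y) \<ge> - ((cmod x)^2 + (cmod y)^2) / 2"
proof -
  have "- (cmod x * cmod y) \<le> Re (cnj x * y)"
    using abs_Re_le_cmod[of "cnj x * y"] by (simp add: norm_mult abs_le_iff)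
  moreover have "2 * (cmod x * cmod y) \<le> (cmod x)^2 + (cmod y)^2"
    using sum_squares_bound[of "cmod x" "cmod y"] by simp
  ultimately have "- ((cmod x)^2 + (cmod y)^2) \<le> 2 * Re (cnj x * y)" by linarith
  then show ?thesis by (simp add: field_simps)
qed

lemma sig_prod_le:
  fixes r a c :: nat and \<sigma> :: "nat \<Rightarrow> real"
  assumes mono: "\<And>i j. i \<le> j \<Longrightarrow> j < r \<Longrightarrow> \<sigma> j \<le> (\<sigma> i::real)"
    and pos: "\<And>i. i < r \<Longrightarrow> \<sigma> i > 0"
    and "a \<noteq> c" "a < r" "c < r"
  shows "\<sigma> a * \<sigma> c \<le> \<sigma> 0 * \<sigma> 1"
proof -
  have key: "\<sigma> x * \<sigma> y \<le> \<sigma> 0 * \<sigma> 1" if "x < y" "y < r" for x y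
  proof -
    have xr: "x < r" using that by (meson less_trans)
    have "\<sigma> x \<le> \<sigma> 0" using mono[of 0 x] xr by simp
    moreover have "\<sigma> y \<le> \<sigma> 1" using mono[of 1 y] that by simp
    moreover have "0 \<le> \<sigma> y" using pos[of y] that by simp
    moreover have "0 \<le> \<sigma> 0" using pos[of 0] that by simp
    ultimately show ?thesis by (intro mult_mono) auto
  qed
  show ?thesis
  proof (cases "a < c")
    case True then show ?thesis using key assms by auto
  next
    case False then have "c < a" using assms by auto
    then show ?thesis using key[of c a] assms by (simp add: mult.commute)
  qed
qed

theorem lemma4:
  fixes N1 N2 r :: nat and \<sigma> :: "nat \<Rightarrow> real" and lam :: real
  assumes "r \<le> min N1 N2"
    and "\<And>i j. i \<le> j \<Longrightarrow> j < r \<Longrightarrow> \<sigma> j \<le> \<sigma> i"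
    and "\<And>i. i < r \<Longrightarrow> \<sigma> i > 0"
    and "(\<Sum>i<r. (\<sigma> i)\<^sup>2) = 1"
    and "0 \<le> lam" and "lam \<le> 1"
  shows "psd N1 N2 (ptrans1 (Qop N1 N2 r \<sigma> lam)) \<longleftrightarrow>
         lam \<le> 1 / (1 + real (N1 * N2) * \<sigma> 0 * (if r = 1 then 0 else \<sigma> 1))"
proof -
  define N where "N = real (N1 * N2)"
  define p where "p = (1 - lam) / N"
  define s1 where "s1 = (if r = 1 then 0 else \<sigma> 1)"
  define K where "K = \<sigma> 0 * s1"
  have r1: "r \<ge> 1" using assms(4) by (cases r) auto
  then have "N1 \<ge> 1" "N2 \<ge> 1" using assms(1) by auto
  then have Npos: "N > 0" unfolding N_def by simp
  have s0: "\<sigma> 0 > 0" using assms(3) r1 by simp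
  have s1nn: "s1 \<ge> 0" unfolding s1_def using assms(3)[of 1] r1 by auto
  have Knn: "K \<ge> 0" unfolding K_def using s0 s1nn by simp
  have D: "1 + N * \<sigma> 0 * s1 > 0" using Npos s0 s1nn by (simp add: add_pos_nonneg)
  have "lam \<le> 1 / (1 + N * \<sigma> 0 * s1) \<longleftrightarrow> lam * (1 + N * \<sigma> 0 * s1) \<le> 1"
    using D by (simp add: le_divide_eq)
  also have "\<dots> \<longleftrightarrow> lam * K * N \<le> 1 - lam" unfolding K_def by (simp add: algebra_simps)
  also have "\<dots> \<longleftrightarrow> lam * K \<le> p" unfolding p_def using Npos by (simp add: le_divide_eq)
  finally have rhs: "lam \<le> 1 / (1 + N * \<sigma> 0 * s1) \<longleftrightarrow> lam * K \<le> p" .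
  have fin: "finite (basis_idx N1 N2)" unfolding basis_idx_def by simp
  show ?thesis
    unfolding psd_iff[OF assms(1)] N_def[symmetric] s1_def[symmetric] rhs p_def[symmetric]
  proof
    assume H: "\<forall>v. 0 \<le> p * (\<Sum>x\<in>basis_idx N1 N2. (cmod (v x))\<^sup>2) +
        (\<Sum>a<r. \<Sum>c<r. lam * (\<sigma> a * \<sigma> c) * Re (cnj (v (a, c)) * v (c, a)))"
    show "lam * K \<le> p"
    proof (cases "r = 1")
      case True
      then have "K = 0" unfolding K_def s1_def by simp
      moreover have "p \<ge> 0" unfolding p_def using Npos assms(6) by simp
      ultimately show ?thesis by simp
    next
      case False
      then have r2: "r \<ge> 2" using r1 by auto
      have K1: "K = \<sigma> 0 * \<sigma> 1" unfolding K_def s1_def using False by simp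
      define v where "v = (\<lambda>x::nat\<times>nat. if x = (0,1) then (1::complex) else if x = (1,0) then -1 else 0)"
      have in1: "(0,1) \<in> basis_idx N1 N2" "(1,0) \<in> basis_idx N1 N2"
        using r2 assms(1) unfolding basis_idx_def by auto
      have "(\<Sum>x\<in>basis_idx N1 N2. (cmod (v x))\<^sup>2)
          = (\<Sum>x\<in>basis_idx N1 N2. (if x = (0,1) then 1 else 0) + (if x = (1,0) then 1 else 0))"
        by (intro sum.cong) (auto simp: v_def)
      also have "\<dots> = 2" using fin in1 by (simp add: sum.distrib)
      finally have A: "(\<Sum>x\<in>basis_idx N1 N2. (cmod (v x))\<^sup>2) = 2" .
      define m where "m = lam * (\<sigma> 0 * \<sigma> 1)"
      have "(\<Sum>a<r. \<Sum>c<r. lam * (\<sigma> a * \<sigma> c) * Re (cnj (v (a, c)) * v (c, a)))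
          = (\<Sum>x\<in>{..<r}\<times>{..<r}. lam * (\<sigma> (fst x) * \<sigma> (snd x)) * Re (cnj (v x) * v (snd x, fst x)))"
        by (simp add: sum_prod)
      also have "\<dots> = (\<Sum>x\<in>{..<r}\<times>{..<r}. (if x = (0,1) then - m else 0) + (if x = (1,0) then - m else 0))"
        by (intro sum.cong refl) (auto simp: v_def m_def mult.commute)
      also have "\<dots> = - 2 * m" using r2 by (simp add: sum.distrib)
      finally have B: "(\<Sum>a<r. \<Sum>c<r. lam * (\<sigma> a * \<sigma> c) * Re (cnj (v (a, c)) * v (c, a))) = - 2 * m" .
      from H[rule_format, of v] have "0 \<le> p * 2 - 2 * m" unfolding A B by simp
      then show ?thesis unfolding K1 m_def by (simp add: algebra_simps)
    qed
  next
    assume H: "lam * K \<le> p"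
    show "\<forall>v. 0 \<le> p * (\<Sum>x\<in>basis_idx N1 N2. (cmod (v x))\<^sup>2) +
        (\<Sum>a<r. \<Sum>c<r. lam * (\<sigma> a * \<sigma> c) * Re (cnj (v (a, c)) * v (c, a)))"
    proof
      fix v :: "nat \<times> nat \<Rightarrow> complex"
      define M where "M = lam * K"
      have Mnn: "M \<ge> 0" unfolding M_def using Knn assms(5) by simp
      define X where "X a c = (cmod (v (a,c)))^2" for a c
      have gb: "lam * (\<sigma> a * \<sigma> c) * Re (cnj (v (a, c)) * v (c, a)) \<ge> - M * (X a c + X c a) / 2"
        if ac: "a < r" "c < r" for a c
      proof (cases "a = c")
        case True
        have "Re (cnj (v (a, c)) * v (c, a)) = (cmod (v (a,a)))^2" using True by (simp add: norm_sq)
        then have "lam * (\<sigma> a * \<sigma> c) * Re (cnj (v (a, c)) * v (c, a)) \<ge> 0"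
          using assms(3)[OF ac(1)] assms(3)[OF ac(2)] assms(5) by simp
        moreover have "- M * (X a c + X c a) / 2 \<le> 0" using Mnn unfolding X_def by simp
        ultimately show ?thesis by linarith
      next
        case False
        then have "r \<noteq> 1" using ac by auto
        then have K1: "K = \<sigma> 0 * \<sigma> 1" unfolding K_def s1_def by simp
        have le: "\<sigma> a * \<sigma> c \<le> K" unfolding K1
          using sig_prod_le[of r \<sigma> a c] assms(2,3) False ac by blast
        have nn: "0 \<le> lam * (\<sigma> a * \<sigma> c)" using assms(3)[OF ac(1)] assms(3)[OF ac(2)] assms(5) by simp
        have re: "Re (cnj (v (a, c)) * v (c, a)) \<ge> - (X a c + X c a) / 2"
          unfolding X_def using re_bound by simp
        have "lam * (\<sigma> a * \<sigma> c) * Re (cnj (v (a, c)) * v (c, a)) \<ge> lam * (\<sigma> a * \<sigma> c) * (- (X a c + X c a) / 2)"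
          using mult_left_mono[OF re nn] .
        moreover have "lam * (\<sigma> a * \<sigma> c) * (- (X a c + X c a) / 2) \<ge> M * (- (X a c + X c a) / 2)"
        proof (rule mult_right_mono_neg)
          show "lam * (\<sigma> a * \<sigma> c) \<le> M" unfolding M_def using le assms(5) by (simp add: mult_left_mono)
          show "- (X a c + X c a) / 2 \<le> 0" unfolding X_def by simp
        qed
        moreover have "M * (- (X a c + X c a) / 2) = - M * (X a c + X c a) / 2" by (simp add: algebra_simps)
        ultimately show ?thesis by linarith
      qed
      define G where "G = (\<Sum>a<r. \<Sum>c<r. lam * (\<sigma> a * \<sigma> c) * Re (cnj (v (a, c)) * v (c, a)))"
      define V where "V = (\<Sum>x\<in>basis_idx N1 N2. (cmod (v x))\<^sup>2)"
      define W where "W = (\<Sum>a<r. \<Sum>c<r. X a c)"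
      have G1: "G \<ge> (\<Sum>a<r. \<Sum>c<r. - M * (X a c + X c a) / 2)"
        unfolding G_def using gb by (intro sum_mono) auto
      have G2: "(\<Sum>a<r. \<Sum>c<r. - M * (X a c + X c a) / 2)
          = - M / 2 * ((\<Sum>a<r. \<Sum>c<r. X a c) + (\<Sum>a<r. \<Sum>c<r. X c a))"
      proof -
        have "(\<Sum>a<r. \<Sum>c<r. - M * (X a c + X c a) / 2) = (\<Sum>a<r. \<Sum>c<r. - M / 2 * X a c + - M / 2 * X c a)"
          by (intro sum.cong refl) (simp add: field_simps)
        also have "\<dots> = (\<Sum>a<r. \<Sum>c<r. - M / 2 * X a c) + (\<Sum>a<r. \<Sum>c<r. - M / 2 * X c a)"
          by (simp only: sum.distrib)
        also have "\<dots> = - M / 2 * ((\<Sum>a<r. \<Sum>c<r. X a c) + (\<Sum>a<r. \<Sum>c<r. X c a))"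
          by (simp add: sum_distrib_left distrib_left)
        finally show ?thesis .
      qed
      have G3: "(\<Sum>a<r. \<Sum>c<r. X c a) = W" unfolding W_def by (rule sum.swap)
      have G5: "- M / 2 * (W + W) \<le> G" using G1 unfolding G2 G3 W_def[symmetric] .
      have "- M / 2 * (W + W) = - (M * W)" by (simp add: algebra_simps)
      then have G4: "G \<ge> - (M * W)" using G5 by linarith
      have WV: "W \<le> V"
      proof -
        have "W = (\<Sum>x\<in>{..<r}\<times>{..<r}. (cmod (v x))\<^sup>2)"
          unfolding W_def X_def by (simp add: sum_prod)
        also have "\<dots> \<le> V" unfolding V_def
          using fin assms(1) by (intro sum_mono2) (auto simp: basis_idx_def)
        finally show ?thesis .
      qed
      have Vnn: "V \<ge> 0" unfolding V_def by (simp add: sum_nonneg)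
      have MV: "M * W \<le> M * V" using WV Mnn by (rule mult_left_mono)
      have "M \<le> p" using H M_def by simp
      then have PV: "M * V \<le> p * V" using Vnn by (rule mult_right_mono)
      have "0 \<le> p * V + G" using G4 MV PV by linarith
      then show "0 \<le> p * (\<Sum>x\<in>basis_idx N1 N2. (cmod (v x))\<^sup>2) +
        (\<Sum>a<r. \<Sum>c<r. lam * (\<sigma> a * \<sigma> c) * Re (cnj (v (a, c)) * v (c, a)))"
        unfolding G_def V_def .
    qed
  qed
qed

end
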